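(* Let $\|\cdot\|_\alpha$ be a norm from a dimension-invariant family of matrix norms, let $u>0$, and let $A$ be $n\times n$ with blocking $\mathcal{I}$ having $n_t$ blocks. Let $\widehat L$ be block lower triangular and $\widehat R$ block upper triangular (with respect to $\mathcal{I}$), and let $A^{(1)}=A,A^{(2)},\dots,A^{(n_t)}$ be matrices where $A^{(k)}$ has block rows and columns indexed $k,\dots,n_t$. Write $\mathcal{T}_k=k+1:n_t$. Assume that for all $1\le k\le n_t$, $$A^{(k)}_{kk}=\widehat L_{kk}\widehat R_{kk}+E^{(k)}_{11},\quad \|E^{(k)}_{11}\|_\alpha\le c^{(k)}_{11}u\|A^{(k)}_{kk}\|_\alpha,$$ and that for all $1\le k\le n_t-1$, $$A^{(k)}_{k\mathcal{T}_k}=\widehat L_{kk}\widehat R_{k\mathcal{T}_k}+E^{(k)}_{12},\quad \|E^{(k)}_{12}\|_\alpha\le c^{(k)}_{12}u\|\widehat L_{kk}\|_\alpha\|\widehat R_{k\mathcal{T}_k}\|_\alpha,$$ $$A^{(k)}_{\mathcal{T}_kk}=\widehat L_{\mathcal{T}_kk}\widehat R_{kk}+E^{(k)}_{21},\quad \|E^{(k)}_{21}\|_\alpha\le c^{(k)}_{21}u\|\widehat L_{\mathcal{T}_kk}\|_\alpha\|\widehat R_{kk}\|_\alpha,$$ $$A^{(k+1)}=A^{(k)}_{\mathcal{T}_k\mathcal{T}_k}-\widehat L_{\mathcal{T}_kk}\widehat R_{k\mathcal{T}_k}+E^{(k)}_{22},\quad \|E^{(k)}_{22}\|_\alpha\le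 c^{(k)}_{22A}u\|A^{(k)}_{\mathcal{T}_k\mathcal{T}_k}\|_\alpha+c^{(k)}_{22LU}u\|\widehat L_{\mathcal{T}_kk}\|_\alpha\|\widehat R_{k\mathcal{T}_k}\|_\alpha,$$ with nonnegative constants $c^{(k)}_{\ast}$. Let $\rho=\max_{1\le k\le n_t}\|A^{(k)}\|_\alpha/\|A\|_\alpha$. Then $$\|A-\widehat L\widehat R\|_\alpha\le C_Au\rho\|A\|_\alpha+C_{LU}u\|\widehat L\|_\alpha\|\widehat R\|_\alpha,$$ where $C_A=\sum_{k=1}^{n_t}c^{(k)}_{11}+\sum_{k=1}^{n_t-1}c^{(k)}_{22A}$ and $C_{LU}=\sum_{k=1}^{n_t-1}\big(c^{(k)}_{21}+c^{(k)}_{12}+c^{(k)}_{22LU}\big)$.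
   Context: A dimension-invariant family of matrix norms is a choice of norm for matrices of every size such that for every matrix $B$ and every partition of its rows and columns into contiguous blocks $B_{i,j}$, $\max_{i,j}\|B_{i,j}\|\le\|B\|\le\sum_{i,j}\|B_{i,j}\|$. Blocking: a strictly increasing list $\mathcal{I}=[1=\mathcal{I}_1<\dots<\mathcal{I}_{n_t+1}=n+1]$; block $(i,j)$ of a matrix is the submatrix with rows $\mathcal{I}_i:\mathcal{I}_{i+1}-1$ and columns $\mathcal{I}_j:\mathcal{I}_{j+1}-1$, and $B_{i:j,k:l}$ denotes a range of blocks. The hypotheses model a floating-point block LU factorization (unit roundoff $u$) in which the Schur complement updates are performed in order. *)

theory Defs
  imports "Jordan_Normal_Form.Matrix"
begin

definition submat_rng :: "'a mat \<Rightarrow> nat \<Rightarrow> nat \<Rightarrow> nat \<Rightarrow> nat \<Rightarrow> 'a mat" where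
  "submat_rng B r0 r1 c0 c1 = mat (r1 - r0) (c1 - c0) (\<lambda>(i,j). B $$ (r0 + i, c0 + j))"

text \<open>Block k (1-based, 1 <= k <= nt) consists of the indices I!(k-1) ..< I!k.\<close>
definition blocking :: "nat list \<Rightarrow> nat \<Rightarrow> bool" where
  "blocking I n \<longleftrightarrow> 2 \<le> length I \<and> I ! 0 = 0 \<and> I ! (length I - 1) = n \<and> sorted_wrt (<) I"

definition nblocks :: "nat list \<Rightarrow> nat" where
  "nblocks I = length I - 1"

text \<open>Block range (i:j, k:l) (1-based, inclusive) of a matrix whose first row/column
  corresponds to global index off (off = 0 for full matrices; off = I!(k-1) for A^(k)).\<close>
definition blk :: "nat list \<Rightarrow> nat \<Rightarrow> 'a mat \<Rightarrow> nat \<Rightarrow> nat \<Rightarrow> nat \<Rightarrow> nat \<Rightarrow> 'a mat" where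
  "blk I off B i j k l = submat_rng B (I ! (i - 1) - off) (I ! j - off) (I ! (k - 1) - off) (I ! l - off)"

definition matrix_norm_family :: "(real mat \<Rightarrow> real) \<Rightarrow> bool" where
  "matrix_norm_family N \<longleftrightarrow>
     (\<forall>m p. \<forall>B \<in> carrier_mat m p. 0 \<le> N B \<and> (N B = 0 \<longleftrightarrow> B = 0\<^sub>m m p)) \<and>
     (\<forall>m p c. \<forall>B \<in> carrier_mat m p. N (c \<cdot>\<^sub>m B) = \<bar>c\<bar> * N B) \<and>
     (\<forall>m p. \<forall>B \<in> carrier_mat m p. \<forall>C \<in> carrier_mat m p. N (B + C) \<le> N B + N C)"

definition dim_invariant_norm :: "(real mat \<Rightarrow> real) \<Rightarrow> bool" where
  "dim_invariant_norm N \<longleftrightarrow> matrix_norm_family N \<and>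
     (\<forall>m p B RI CI. B \<in> carrier_mat m p \<longrightarrow> blocking RI m \<longrightarrow> blocking CI p \<longrightarrow>
        (\<forall>i \<in> {1..nblocks RI}. \<forall>j \<in> {1..nblocks CI}.
            N (submat_rng B (RI ! (i - 1)) (RI ! i) (CI ! (j - 1)) (CI ! j)) \<le> N B) \<and>
        N B \<le> (\<Sum>i = 1..nblocks RI. \<Sum>j = 1..nblocks CI.
            N (submat_rng B (RI ! (i - 1)) (RI ! i) (CI ! (j - 1)) (CI ! j))))"

definition block_lower :: "nat list \<Rightarrow> 'a::zero mat \<Rightarrow> bool" where
  "block_lower I L \<longleftrightarrow> (\<forall>i j. 1 \<le> i \<and> i < j \<and> j \<le> nblocks I \<longrightarrow>
      blk I 0 L i i j j = 0\<^sub>m (I ! i - I ! (i - 1)) (I ! j - I ! (j - 1)))"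

definition block_upper :: "nat list \<Rightarrow> 'a::zero mat \<Rightarrow> bool" where
  "block_upper I R \<longleftrightarrow> (\<forall>i j. 1 \<le> j \<and> j < i \<and> i \<le> nblocks I \<longrightarrow>
      blk I 0 R i i j j = 0\<^sub>m (I ! i - I ! (i - 1)) (I ! j - I ! (j - 1)))"

end

theory Submission imports Defs begin

lemma sub_dims[simp]: "dim_row (submat_rng B r0 r1 c0 c1) = r1 - r0" "dim_col (submat_rng B r0 r1 c0 c1) = c1 - c0"
  by (simp_all add: submat_rng_def)

lemma sub_idx[simp]: "i < r1 - r0 \<Longrightarrow> j < c1 - c0 \<Longrightarrow> submat_rng B r0 r1 c0 c1 $$ (i,j) = B $$ (r0+i, c0+j)"
  by (simp add: submat_rng_def)

lemma sub_full: "B \<in> carrier_mat m p \<Longrightarrow> submat_rng B 0 m 0 p = B"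
  by (rule eq_matI) auto

lemma sub_mult_entry:
  "i < r1 - r0 \<Longrightarrow> j < c1 - c0 \<Longrightarrow>
   (submat_rng L r0 r1 a0 a1 * submat_rng R a0 a1 c0 c1) $$ (i,j) = (\<Sum>l\<in>{0..<a1-a0}. L$$(r0+i, a0+l) * R$$(a0+l, c0+j))"
  by (simp add: scalar_prod_def)

lemma mult_entry:
  "i < dim_row X \<Longrightarrow> j < dim_col Y \<Longrightarrow> dim_col X = dim_row Y \<Longrightarrow>
   (X * Y) $$ (i,j) = (\<Sum>l\<in>{0..<dim_col X}. X$$(i, l) * Y$$(l, j))"
  by (simp add: scalar_prod_def)

lemma norm_nonneg: "dim_invariant_norm N \<Longrightarrow> 0 \<le> N (B::real mat)"
  unfolding dim_invariant_norm_def matrix_norm_family_def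
  by (metis carrier_matI)

lemma norm_empty: "dim_invariant_norm N \<Longrightarrow> dim_row B = 0 \<or> dim_col B = 0 \<Longrightarrow> N (B::real mat) = 0"
proof -
  assume n: "dim_invariant_norm N" and d: "dim_row B = 0 \<or> dim_col B = 0"
  have "B = 0\<^sub>m (dim_row B) (dim_col B)" using d by (intro eq_matI) auto
  then show ?thesis using n unfolding dim_invariant_norm_def matrix_norm_family_def
    by (metis carrier_matI)
qed

lemma norm_tri: "dim_invariant_norm N \<Longrightarrow> B \<in> carrier_mat m p \<Longrightarrow> C \<in> carrier_mat m p \<Longrightarrow> N (B + C) \<le> N B + N (C::real mat)"
  unfolding dim_invariant_norm_def matrix_norm_family_def by blast

lemma norm_minus: assumes n: "dim_invariant_norm N" and B: "B \<in> carrier_mat m p" and C: "C \<in> carrier_mat m p"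
  shows "N (B - C) \<le> N B + N (C::real mat)"
proof -
  have "B - C = B + (-1) \<cdot>\<^sub>m C" using B C by (intro eq_matI) auto
  moreover have "N ((-1) \<cdot>\<^sub>m C) = N C" using n C unfolding dim_invariant_norm_def matrix_norm_family_def by fastforce
  moreover have "N (B + (-1) \<cdot>\<^sub>m C) \<le> N B + N ((-1) \<cdot>\<^sub>m C)" using norm_tri[OF n B] C by simp
  ultimately show ?thesis by simp
qed

lemma exists_part: assumes "r0 < r1" "r1 \<le> m"
  shows "\<exists>RI i. blocking RI m \<and> i \<in> {1..nblocks RI} \<and> RI!(i-1) = r0 \<and> RI!i = r1"
proof (cases "r0 = 0")
  case True
  show ?thesis
  proof (cases "r1 = m")
    case True2: True
    show ?thesis using assms True True2 by (intro exI[of _ "[0,m]"] exI[of _ 1]) (auto simp: blocking_def nblocks_def)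
  next
    case False
    show ?thesis using assms True False by (intro exI[of _ "[0,r1,m]"] exI[of _ 1]) (auto simp: blocking_def nblocks_def)
  qed
next
  case False0: False
  show ?thesis
  proof (cases "r1 = m")
    case True2: True
    show ?thesis using assms False0 True2 by (intro exI[of _ "[0,r0,m]"] exI[of _ 2]) (auto simp: blocking_def nblocks_def)
  next
    case False
    show ?thesis using assms False0 False by (intro exI[of _ "[0,r0,r1,m]"] exI[of _ 2]) (auto simp: blocking_def nblocks_def)
  qed
qed

lemma dim_inv_D: assumes n: "dim_invariant_norm N" and B: "B \<in> carrier_mat m p" and RI: "blocking RI m" and CI: "blocking CI p"
  shows "(\<forall>i \<in> {1..nblocks RI}. \<forall>j \<in> {1..nblocks CI}.
            N (submat_rng B (RI ! (i - 1)) (RI ! i) (CI ! (j - 1)) (CI ! j)) \<le> N B) \<and>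
        N B \<le> (\<Sum>i = 1..nblocks RI. \<Sum>j = 1..nblocks CI.
            N (submat_rng B (RI ! (i - 1)) (RI ! i) (CI ! (j - 1)) (CI ! j)))"
proof -
  have H: "\<forall>m p B RI CI. B \<in> carrier_mat m p \<longrightarrow> blocking RI m \<longrightarrow> blocking CI p \<longrightarrow>
        (\<forall>i \<in> {1..nblocks RI}. \<forall>j \<in> {1..nblocks CI}.
            N (submat_rng B (RI ! (i - 1)) (RI ! i) (CI ! (j - 1)) (CI ! j)) \<le> N B) \<and>
        N B \<le> (\<Sum>i = 1..nblocks RI. \<Sum>j = 1..nblocks CI.
            N (submat_rng B (RI ! (i - 1)) (RI ! i) (CI ! (j - 1)) (CI ! j)))"
    using n unfolding dim_invariant_norm_def by (rule conjunct2)
  show ?thesis using mp[OF mp[OF mp[OF spec[OF spec[OF spec[OF spec[OF spec[OF H, of m], of p], of B], of RI], of CI] B] RI] CI] .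
qed

lemma sub_bound: assumes n: "dim_invariant_norm N" and B: "B \<in> carrier_mat m p"
  and r: "r0 \<le> r1" "r1 \<le> m" and c: "c0 \<le> c1" "c1 \<le> p"
  shows "N (submat_rng B r0 r1 c0 c1) \<le> N (B::real mat)"
proof (cases "r0 = r1 \<or> c0 = c1")
  case True
  then show ?thesis using norm_empty[OF n, of "submat_rng B r0 r1 c0 c1"] norm_nonneg[OF n, of B] by auto
next
  case False
  then obtain RI i where RI: "blocking RI m" "i \<in> {1..nblocks RI}" "RI!(i-1) = r0" "RI!i = r1"
    using exists_part[of r0 r1 m] r by fastforce
  obtain CI j where CI: "blocking CI p" "j \<in> {1..nblocks CI}" "CI!(j-1) = c0" "CI!j = c1"
    using exists_part[of c0 c1 p] c False by fastforce
  have "\<forall>i\<in>{1..nblocks RI}. \<forall>j\<in>{1..nblocks CI}. N (submat_rng B (RI!(i-1)) (RI!i) (CI!(j-1)) (CI!j)) \<le> N B"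
    using dim_inv_D[OF n B RI(1) CI(1)] by (rule conjunct1)
  then have "N (submat_rng B (RI!(i-1)) (RI!i) (CI!(j-1)) (CI!j)) \<le> N B" using RI(2) CI(2) by blast
  then show ?thesis using RI CI by simp
qed

lemma four_bound: assumes n: "dim_invariant_norm N" and B: "B \<in> carrier_mat m m" and b: "0 < b" "b < m"
  shows "N (B::real mat) \<le> N (submat_rng B 0 b 0 b) + N (submat_rng B 0 b b m) + N (submat_rng B b m 0 b) + N (submat_rng B b m b m)"
proof -
  have bl: "blocking [0,b,m] m" using b by (auto simp: blocking_def)
  have nb: "nblocks [0,b,m] = 2" by (simp add: nblocks_def)
  have "N B \<le> (\<Sum>i = 1..2. \<Sum>j = 1..2. N (submat_rng B ([0,b,m] ! (i - 1)) ([0,b,m] ! i) ([0,b,m] ! (j - 1)) ([0,b,m] ! j)))"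
    using conjunct2[OF dim_inv_D[OF n B bl bl]] unfolding nb .
  also have "\<dots> = N (submat_rng B 0 b 0 b) + N (submat_rng B 0 b b m) + N (submat_rng B b m 0 b) + N (submat_rng B b m b m)"
    by (simp add: numeral_2_eq_2)
  finally show ?thesis .
qed


lemma sum_split: fixes f :: "nat \<Rightarrow> 'a::comm_monoid_add" shows "b \<le> m \<Longrightarrow> (\<Sum>l\<in>{0..<m}. f l) = (\<Sum>l\<in>{0..<b}. f l) + (\<Sum>l\<in>{0..<m-b}. f (b + l))"
proof -
  assume bm: "b \<le> m"
  have "(\<Sum>l\<in>{0..<m}. f l) = (\<Sum>l\<in>{0..<b}. f l) + (\<Sum>l\<in>{b..<m}. f l)"
    using sum.atLeastLessThan_concat[where m=0 and n=b and p=m and g=f] bm by simp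
  also have "(\<Sum>l\<in>{b..<m}. f l) = (\<Sum>l\<in>{0..<m-b}. f (b + l))"
    using sum.shift_bounds_nat_ivl[where g=f and m=0 and k=b and n="m-b"] bm by (simp add: add.commute)
  finally show ?thesis .
qed

lemma blocking_facts: assumes "blocking I n"
  shows "length I = nblocks I + 1" "I!0 = 0" "I ! nblocks I = n" "1 \<le> nblocks I"
  using assms by (auto simp: blocking_def nblocks_def)

lemma Imono: assumes "blocking I n" "a < c" "c \<le> nblocks I" shows "I!a < I!c"
  using sorted_wrt_nth_less[of "(<)" I a c] assms by (auto simp: blocking_def nblocks_def)

lemma Imono_le: assumes "blocking I n" "a \<le> c" "c \<le> nblocks I" shows "I!a \<le> I!c"
  using Imono[OF assms(1), of a c] assms by (cases "a = c") auto

lemma locate: assumes I: "blocking I n" and x: "x < n"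
  shows "\<exists>b\<in>{1..nblocks I}. I!(b-1) \<le> x \<and> x < I!b"
proof -
  define b where "b = (LEAST b. x < I!b)"
  have ex: "x < I!(nblocks I)" using blocking_facts[OF I] x by simp
  have b1: "x < I!b" unfolding b_def by (rule LeastI[of _ "nblocks I"], rule ex)
  have b2: "b \<le> nblocks I" unfolding b_def by (rule Least_le, rule ex)
  have b0: "b \<noteq> 0" using b1 blocking_facts(2)[OF I] by (cases b) auto
  have "\<not> x < I!(b-1)" unfolding b_def using b0 b_def
    by (metis One_nat_def Suc_pred bot_nat_0.not_eq_extremum diff_Suc_less not_less_Least)
  then show ?thesis using b0 b1 b2 by (intro bexI[of _ b]) auto
qed

lemma Lzero: assumes I: "blocking I n" and Ll: "block_lower I L" and k: "k \<le> nblocks I"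
  and i: "i < I!k" and x: "I!k \<le> x" "x < n"
  shows "L $$ (i,x) = 0"
proof -
  have "I!k \<le> n" using Imono_le[OF I k order.refl] blocking_facts[OF I] by simp
  then obtain bi where bi: "bi \<in> {1..nblocks I}" "I!(bi-1) \<le> i" "i < I!bi" using locate[OF I, of i] i x by auto
  obtain bx where bx: "bx \<in> {1..nblocks I}" "I!(bx-1) \<le> x" "x < I!bx" using locate[OF I, of x] x by auto
  have "bi \<le> k"
  proof (rule ccontr)
    assume "\<not> bi \<le> k"
    then have "I!k \<le> I!(bi-1)" using Imono_le[OF I, of k "bi-1"] bi by auto
    then show False using bi i by simp
  qed
  moreover have "k < bx"
  proof (rule ccontr)
    assume "\<not> k < bx"
    then have "I!bx \<le> I!k" using Imono_le[OF I, of bx k] k by auto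
    then show False using bx x by simp
  qed
  ultimately have z: "blk I 0 L bi bi bx bx = 0\<^sub>m (I ! bi - I ! (bi - 1)) (I ! bx - I ! (bx - 1))"
    using Ll bi bx unfolding block_lower_def by auto
  have "blk I 0 L bi bi bx bx $$ (i - I!(bi-1), x - I!(bx-1)) = L $$ (i,x)"
    unfolding blk_def using bi bx by simp
  then show ?thesis using z bi bx by simp
qed

lemma Rzero: assumes I: "blocking I n" and Ru: "block_upper I R" and k: "k \<le> nblocks I"
  and i: "i < I!k" and x: "I!k \<le> x" "x < n"
  shows "R $$ (x,i) = 0"
proof -
  have "I!k \<le> n" using Imono_le[OF I k order.refl] blocking_facts[OF I] by simp
  then obtain bi where bi: "bi \<in> {1..nblocks I}" "I!(bi-1) \<le> i" "i < I!bi" using locate[OF I, of i] i x by auto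
  obtain bx where bx: "bx \<in> {1..nblocks I}" "I!(bx-1) \<le> x" "x < I!bx" using locate[OF I, of x] x by auto
  have "bi \<le> k"
  proof (rule ccontr)
    assume "\<not> bi \<le> k"
    then have "I!k \<le> I!(bi-1)" using Imono_le[OF I, of k "bi-1"] bi by auto
    then show False using bi i by simp
  qed
  moreover have "k < bx"
  proof (rule ccontr)
    assume "\<not> k < bx"
    then have "I!bx \<le> I!k" using Imono_le[OF I, of bx k] k by auto
    then show False using bx x by simp
  qed
  ultimately have z: "blk I 0 R bx bx bi bi = 0\<^sub>m (I ! bx - I ! (bx - 1)) (I ! bi - I ! (bi - 1))"
    using Ru bi bx unfolding block_upper_def by auto
  have "blk I 0 R bx bx bi bi $$ (x - I!(bx-1), i - I!(bi-1)) = R $$ (x,i)"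
    unfolding blk_def using bi bx by simp
  then show ?thesis using z bi bx by simp
qed

theorem theorem2p3:
  fixes N :: "real mat \<Rightarrow> real" and u :: real and n :: nat and I :: "nat list"
    and A L R :: "real mat" and Ak :: "nat \<Rightarrow> real mat"
    and c11 c12 c21 c22A c22LU :: "nat \<Rightarrow> real"
  assumes norm: "dim_invariant_norm N"
    and u: "u > 0"
    and A: "A \<in> carrier_mat n n" and A_nz: "A \<noteq> 0\<^sub>m n n"
    and I: "blocking I n"
    and L: "L \<in> carrier_mat n n" and R: "R \<in> carrier_mat n n"
    and Llow: "block_lower I L" and Rupp: "block_upper I R"
    and A1: "Ak 1 = A"
    and Akdim: "\<forall>k \<in> {1..nblocks I}. Ak k \<in> carrier_mat (n - I ! (k - 1)) (n - I ! (k - 1))"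
    and c11_nn: "\<forall>k \<in> {1..nblocks I}. 0 \<le> c11 k"
    and c_nn: "\<forall>k \<in> {1..<nblocks I}. 0 \<le> c12 k \<and> 0 \<le> c21 k \<and> 0 \<le> c22A k \<and> 0 \<le> c22LU k"
    and E11: "\<forall>k \<in> {1..nblocks I}.
       N (blk I (I ! (k - 1)) (Ak k) k k k k - blk I 0 L k k k k * blk I 0 R k k k k)
         \<le> c11 k * u * N (blk I (I ! (k - 1)) (Ak k) k k k k)"
    and E12: "\<forall>k \<in> {1..<nblocks I}.
       N (blk I (I ! (k - 1)) (Ak k) k k (k + 1) (nblocks I) - blk I 0 L k k k k * blk I 0 R k k (k + 1) (nblocks I))
         \<le> c12 k * u * N (blk I 0 L k k k k) * N (blk I 0 R k k (k + 1) (nblocks I))"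
    and E21: "\<forall>k \<in> {1..<nblocks I}.
       N (blk I (I ! (k - 1)) (Ak k) (k + 1) (nblocks I) k k - blk I 0 L (k + 1) (nblocks I) k k * blk I 0 R k k k k)
         \<le> c21 k * u * N (blk I 0 L (k + 1) (nblocks I) k k) * N (blk I 0 R k k k k)"
    and E22: "\<forall>k \<in> {1..<nblocks I}.
       N (Ak (k + 1) - (blk I (I ! (k - 1)) (Ak k) (k + 1) (nblocks I) (k + 1) (nblocks I)
                         - blk I 0 L (k + 1) (nblocks I) k k * blk I 0 R k k (k + 1) (nblocks I)))
         \<le> c22A k * u * N (blk I (I ! (k - 1)) (Ak k) (k + 1) (nblocks I) (k + 1) (nblocks I))
           + c22LU k * u * N (blk I 0 L (k + 1) (nblocks I) k k) * N (blk I 0 R k k (k + 1) (nblocks I))"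
  shows "N (A - L * R)
     \<le> ((\<Sum>k = 1..nblocks I. c11 k) + (\<Sum>k = 1..<nblocks I. c22A k)) * u
         * (MAX k \<in> {1..nblocks I}. N (Ak k) / N A) * N A
       + (\<Sum>k = 1..<nblocks I. c21 k + c12 k + c22LU k) * u * N L * N R"
proof -
  let ?nt = "nblocks I"
  note If = blocking_facts[OF I]
  have NA0: "0 \<le> N A" using norm_nonneg[OF norm] .
  have NA: "0 < N A"
  proof -
    have "N A \<noteq> 0" using norm A A_nz unfolding dim_invariant_norm_def matrix_norm_family_def by blast
    then show ?thesis using NA0 by simp
  qed
  define \<rho> where "\<rho> = (MAX k \<in> {1..?nt}. N (Ak k) / N A)"
  have Akr: "N (Ak k) \<le> \<rho> * N A" if k: "k \<in> {1..?nt}" for k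
  proof -
    have "N (Ak k) / N A \<le> \<rho>" unfolding \<rho>_def using k by (intro Max_ge) auto
    then show ?thesis using NA by (simp add: divide_le_eq)
  qed
  have NL: "0 \<le> N L" and NR: "0 \<le> N R" using norm_nonneg[OF norm] by auto
  define D where "D k = Ak k - submat_rng L (I!(k-1)) n (I!(k-1)) n * submat_rng R (I!(k-1)) n (I!(k-1)) n" for k
  have Dentry: "D k $$ (i,j) = Ak k $$ (i,j) - (\<Sum>l\<in>{0..<n - I!(k-1)}. L$$(I!(k-1)+i, I!(k-1)+l) * R$$(I!(k-1)+l, I!(k-1)+j))"
    if "i < n - I!(k-1)" "j < n - I!(k-1)" for k i j
    using that unfolding D_def by (simp add: scalar_prod_def)
  have Dcar: "D k \<in> carrier_mat (n - I!(k-1)) (n - I!(k-1))" for k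
    unfolding D_def by (auto intro!: carrier_matI)
  have Ilt: "I!(k-1) < I!k" if "k \<in> {1..?nt}" for k using Imono[OF I, of "k-1" k] that by auto
  have Ile: "I!k \<le> n" if "k \<le> ?nt" for k using Imono_le[OF I that order.refl] If by simp
  have base: "N (D ?nt) \<le> c11 ?nt * u * (\<rho> * N A)"
  proof -
    let ?s = "I!(?nt-1)"
    have k: "?nt \<in> {1..?nt}" using If by auto
    have Acar: "Ak ?nt \<in> carrier_mat (n - ?s) (n - ?s)" using Akdim k by blast
    have "D ?nt = blk I ?s (Ak ?nt) ?nt ?nt ?nt ?nt - blk I 0 L ?nt ?nt ?nt ?nt * blk I 0 R ?nt ?nt ?nt ?nt"
      unfolding D_def blk_def using sub_full[OF Acar] If by simp
    then have "N (D ?nt) \<le> c11 ?nt * u * N (blk I ?s (Ak ?nt) ?nt ?nt ?nt ?nt)" using E11 k by simp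
    also have "\<dots> \<le> c11 ?nt * u * N (Ak ?nt)"
      using sub_full[OF Acar] If c11_nn k u by (simp add: blk_def)
    also have "\<dots> \<le> c11 ?nt * u * (\<rho> * N A)"
      using Akr[OF k] c11_nn k u by (intro mult_left_mono) auto
    finally show ?thesis .
  qed

  have step: "N (D k) \<le> N (D (k+1)) + c11 k * u * (\<rho> * N A) + c22A k * u * (\<rho> * N A)
      + c21 k * u * (N L * N R) + c12 k * u * (N L * N R) + c22LU k * u * (N L * N R)"
    if k: "k \<in> {1..<?nt}" for k
  proof -
    define s where "s = I!(k-1)"
    define e where "e = I!k"
    define m where "m = n - s"
    define b where "b = e - s"
    have k1: "k \<in> {1..?nt}" and k2: "k+1 \<in> {1..?nt}" using k by auto
    have se: "s < e" unfolding s_def e_def using Ilt[OF k1] .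
    have en: "e < n" unfolding e_def using Imono[OF I, of k ?nt] k If by auto
    have b0: "0 < b" "b < m" using se en unfolding b_def m_def by auto
    have mb: "m - b = n - e" "s + b = e" using se en unfolding b_def m_def by auto
    have Ik1: "I!(k+1-1) = e" unfolding e_def by simp
    have Akc: "Ak k \<in> carrier_mat m m" using Akdim k1 unfolding m_def s_def by blast
    have Ak1c: "Ak (k+1) \<in> carrier_mat (n-e) (n-e)" using Akdim k2 Ik1 by fastforce
    have Dkc: "D k \<in> carrier_mat m m" using Dcar unfolding m_def s_def by blast
    have Dk1c: "D (k+1) \<in> carrier_mat (n-e) (n-e)" using Dcar[of "k+1"] Ik1 by simp
    have Lz: "L $$ (i,x) = 0" if "i < e" "e \<le> x" "x < n" for i x
      using Lzero[OF I Llow, of k i x] that k unfolding e_def by auto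
    have Rz: "R $$ (x,i) = 0" if "i < e" "e \<le> x" "x < n" for i x
      using Rzero[OF I Rupp, of k i x] that k unfolding e_def by auto
    have DE: "D k $$ (i,j) = Ak k $$ (i,j) - (\<Sum>l\<in>{0..<m}. L$$(s+i, s+l) * R$$(s+l, s+j))"
      if "i < m" "j < m" for i j using Dentry[of i k j] that unfolding m_def s_def by simp
    have spl: "(\<Sum>l\<in>{0..<m}. L$$(s+i, s+l) * R$$(s+l, s+j)) = (\<Sum>l\<in>{0..<b}. L$$(s+i, s+l) * R$$(s+l, s+j))
        + (\<Sum>l\<in>{0..<n-e}. L$$(s+i, e+l) * R$$(e+l, s+j))" for i j
      using sum_split[of b m "\<lambda>l. L$$(s+i, s+l) * R$$(s+l, s+j)"] b0 mb by (simp only: add.assoc[symmetric] mb)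
    define X11 where "X11 = submat_rng (Ak k) 0 b 0 b - submat_rng L s e s e * submat_rng R s e s e"
    define X12 where "X12 = submat_rng (Ak k) 0 b b m - submat_rng L s e s e * submat_rng R s e e n"
    define X21 where "X21 = submat_rng (Ak k) b m 0 b - submat_rng L e n s e * submat_rng R s e s e"
    define G where "G = Ak (k+1) - (submat_rng (Ak k) b m b m - submat_rng L e n s e * submat_rng R s e e n)"

    have X11E: "X11 $$ (i,j) = Ak k $$ (i,j) - (\<Sum>l\<in>{0..<b}. L$$(s+i, s+l) * R$$(s+l, s+j))"
      if "i < b" "j < b" for i j
    proof -
      have "X11 $$ (i,j) = submat_rng (Ak k) 0 b 0 b $$ (i,j) - (submat_rng L s e s e * submat_rng R s e s e) $$ (i,j)"
        unfolding X11_def using that b_def by (intro index_minus_mat(1)) auto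
      also have "\<dots> = Ak k $$ (i,j) - (\<Sum>l\<in>{0..<b}. L$$(s+i, s+l) * R$$(s+l, s+j))"
        using that unfolding b_def by (simp only: sub_idx sub_mult_entry) simp
      finally show ?thesis .
    qed
    have eq11: "submat_rng (D k) 0 b 0 b = X11"
    proof (rule eq_matI)
      fix i j assume ij: "i < dim_row X11" "j < dim_col X11"
      then have ij': "i < b" "j < b" unfolding X11_def b_def by auto
      have z: "(\<Sum>l\<in>{0..<n-e}. L$$(s+i, e+l) * R$$(e+l, s+j)) = 0"
        using Lz ij' mb by (intro sum.neutral) auto
      have "submat_rng (D k) 0 b 0 b $$ (i, j) = D k $$ (i,j)" using ij' by simp
      also have "\<dots> = Ak k $$ (i,j) - (\<Sum>l\<in>{0..<m}. L$$(s+i, s+l) * R$$(s+l, s+j))"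
        using ij' b0 by (intro DE) auto
      also have "\<dots> = X11 $$ (i,j)" unfolding spl z X11E[OF ij'] by simp
      finally show "submat_rng (D k) 0 b 0 b $$ (i, j) = X11 $$ (i, j)" .
    qed (auto simp: X11_def b_def)

    have X12E: "X12 $$ (i,j) = Ak k $$ (i,b+j) - (\<Sum>l\<in>{0..<b}. L$$(s+i, s+l) * R$$(s+l, e+j))"
      if "i < b" "j < n - e" for i j
    proof -
      have "X12 $$ (i,j) = submat_rng (Ak k) 0 b b m $$ (i,j) - (submat_rng L s e s e * submat_rng R s e e n) $$ (i,j)"
        unfolding X12_def using that b_def by (intro index_minus_mat(1)) auto
      also have "\<dots> = Ak k $$ (i,b+j) - (\<Sum>l\<in>{0..<b}. L$$(s+i, s+l) * R$$(s+l, e+j))"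
        using that mb unfolding b_def by (simp only: sub_idx sub_mult_entry) simp
      finally show ?thesis .
    qed
    have eq12: "submat_rng (D k) 0 b b m = X12"
    proof (rule eq_matI)
      fix i j assume ij: "i < dim_row X12" "j < dim_col X12"
      then have ij': "i < b" "j < n - e" unfolding X12_def b_def by auto
      have sj: "s + (b + j) = e + j" using mb by simp
      have z: "(\<Sum>l\<in>{0..<n-e}. L$$(s+i, e+l) * R$$(e+l, s+(b+j))) = 0"
        using Lz ij' mb by (intro sum.neutral) auto
      have w: "(\<Sum>l\<in>{0..<b}. L$$(s+i, s+l) * R$$(s+l, s+(b+j))) = (\<Sum>l\<in>{0..<b}. L$$(s+i, s+l) * R$$(s+l, e+j))"
        unfolding sj ..
      have "submat_rng (D k) 0 b b m $$ (i, j) = D k $$ (i,b+j)" using ij' mb by simp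
      also have "\<dots> = Ak k $$ (i,b+j) - (\<Sum>l\<in>{0..<m}. L$$(s+i, s+l) * R$$(s+l, s+(b+j)))"
        using ij' b0 mb by (intro DE) auto
      also have "\<dots> = X12 $$ (i,j)" using spl[of i "b+j"] w z X12E[OF ij'] by linarith
      finally show "submat_rng (D k) 0 b b m $$ (i, j) = X12 $$ (i, j)" .
    qed (use mb in \<open>simp_all add: X12_def\<close>)
    have X21E: "X21 $$ (i,j) = Ak k $$ (b+i,j) - (\<Sum>l\<in>{0..<b}. L$$(e+i, s+l) * R$$(s+l, s+j))"
      if "i < n - e" "j < b" for i j
    proof -
      have "X21 $$ (i,j) = submat_rng (Ak k) b m 0 b $$ (i,j) - (submat_rng L e n s e * submat_rng R s e s e) $$ (i,j)"
        unfolding X21_def using that b_def by (intro index_minus_mat(1)) auto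
      also have "\<dots> = Ak k $$ (b+i,j) - (\<Sum>l\<in>{0..<b}. L$$(e+i, s+l) * R$$(s+l, s+j))"
        using that mb unfolding b_def by (simp only: sub_idx sub_mult_entry) simp
      finally show ?thesis .
    qed
    have eq21: "submat_rng (D k) b m 0 b = X21"
    proof (rule eq_matI)
      fix i j assume ij: "i < dim_row X21" "j < dim_col X21"
      then have ij': "i < n - e" "j < b" unfolding X21_def b_def by auto
      have si: "s + (b + i) = e + i" using mb by simp
      have z: "(\<Sum>l\<in>{0..<n-e}. L$$(s+(b+i), e+l) * R$$(e+l, s+j)) = 0"
        using Rz ij' mb by (intro sum.neutral) auto
      have w: "(\<Sum>l\<in>{0..<b}. L$$(s+(b+i), s+l) * R$$(s+l, s+j)) = (\<Sum>l\<in>{0..<b}. L$$(e+i, s+l) * R$$(s+l, s+j))"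
        unfolding si ..
      have "submat_rng (D k) b m 0 b $$ (i, j) = D k $$ (b+i,j)" using ij' mb by simp
      also have "\<dots> = Ak k $$ (b+i,j) - (\<Sum>l\<in>{0..<m}. L$$(s+(b+i), s+l) * R$$(s+l, s+j))"
        using ij' b0 mb by (intro DE) auto
      also have "\<dots> = X21 $$ (i,j)" using spl[of "b+i" j] w z X21E[OF ij'] by linarith
      finally show "submat_rng (D k) b m 0 b $$ (i, j) = X21 $$ (i, j)" .
    qed (use mb in \<open>simp_all add: X21_def\<close>)
    have Gc: "G \<in> carrier_mat (n-e) (n-e)" unfolding G_def using mb by (auto intro!: carrier_matI)
    have GE: "G $$ (i,j) = Ak (k+1) $$ (i,j) - (Ak k $$ (b+i,b+j) - (\<Sum>l\<in>{0..<b}. L$$(e+i, s+l) * R$$(s+l, e+j)))"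
      if "i < n - e" "j < n - e" for i j
    proof -
      have "G $$ (i,j) = Ak (k+1) $$ (i,j) - (submat_rng (Ak k) b m b m $$ (i,j) - (submat_rng L e n s e * submat_rng R s e e n) $$ (i,j))"
        unfolding G_def using that b_def by (simp del: sub_idx)
      also have "\<dots> = Ak (k+1) $$ (i,j) - (Ak k $$ (b+i,b+j) - (\<Sum>l\<in>{0..<b}. L$$(e+i, s+l) * R$$(s+l, e+j)))"
        using that mb unfolding b_def by (simp only: sub_idx sub_mult_entry)
      finally show ?thesis .
    qed
    have eq22: "submat_rng (D k) b m b m = D (k+1) - G"
    proof (rule eq_matI)
      fix i j assume ij: "i < dim_row (D (k+1) - G)" "j < dim_col (D (k+1) - G)"
      then have ij': "i < n - e" "j < n - e" using Gc by auto
      have si: "s + (b + i) = e + i" "s + (b + j) = e + j" using mb by simp_all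
      have w1: "(\<Sum>l\<in>{0..<b}. L$$(s+(b+i), s+l) * R$$(s+l, s+(b+j))) = (\<Sum>l\<in>{0..<b}. L$$(e+i, s+l) * R$$(s+l, e+j))"
        unfolding si ..
      have w2: "(\<Sum>l\<in>{0..<n-e}. L$$(s+(b+i), e+l) * R$$(e+l, s+(b+j))) = (\<Sum>l\<in>{0..<n-e}. L$$(e+i, e+l) * R$$(e+l, e+j))"
        unfolding si ..
      have D1: "D (k+1) $$ (i,j) = Ak (k+1) $$ (i,j) - (\<Sum>l\<in>{0..<n-e}. L$$(e+i, e+l) * R$$(e+l, e+j))"
        using Dentry[of i "k+1" j] ij' Ik1 by simp
      have "submat_rng (D k) b m b m $$ (i, j) = D k $$ (b+i,b+j)" using ij' mb by simp
      also have "\<dots> = Ak k $$ (b+i,b+j) - (\<Sum>l\<in>{0..<m}. L$$(s+(b+i), s+l) * R$$(s+l, s+(b+j)))"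
        using ij' b0 mb by (intro DE) auto
      also have "\<dots> = D (k+1) $$ (i,j) - G $$ (i,j)" using spl[of "b+i" "b+j"] w1 w2 D1 GE[OF ij'] by linarith
      also have "\<dots> = (D (k+1) - G) $$ (i,j)" using ij' Gc by simp
      finally show "submat_rng (D k) b m b m $$ (i, j) = (D (k+1) - G) $$ (i, j)" .
    qed (use Gc mb in simp_all)
    have "N (D k) \<le> N X11 + N X12 + N X21 + N (D (k+1) - G)"
      using four_bound[OF norm Dkc b0] eq11 eq12 eq21 eq22 by simp
    moreover have "N (D (k+1) - G) \<le> N (D (k+1)) + N G" using norm_minus[OF norm Dk1c Gc] .
    moreover have Lc: "L \<in> carrier_mat n n" and Rc: "R \<in> carrier_mat n n" using L R .
    have sLkk: "N (submat_rng L s e s e) \<le> N L" using sub_bound[OF norm Lc] se en by simp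
    have sLTk: "N (submat_rng L e n s e) \<le> N L" using sub_bound[OF norm Lc] se en by simp
    have sRkk: "N (submat_rng R s e s e) \<le> N R" using sub_bound[OF norm Rc] se en by simp
    have sRkT: "N (submat_rng R s e e n) \<le> N R" using sub_bound[OF norm Rc] se en by simp
    have sA11: "N (submat_rng (Ak k) 0 b 0 b) \<le> \<rho> * N A" using sub_bound[OF norm Akc, of 0 b 0 b] b0 Akr[OF k1] by simp
    have sA22: "N (submat_rng (Ak k) b m b m) \<le> \<rho> * N A" using sub_bound[OF norm Akc, of b m b m] b0 Akr[OF k1] by simp
    have blkA11: "blk I (I!(k-1)) (Ak k) k k k k = submat_rng (Ak k) 0 b 0 b"
      unfolding blk_def s_def e_def b_def by simp
    have blkA12: "blk I (I!(k-1)) (Ak k) k k (k+1) ?nt = submat_rng (Ak k) 0 b b m"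
      unfolding blk_def s_def e_def b_def m_def using If by simp
    have blkA21: "blk I (I!(k-1)) (Ak k) (k+1) ?nt k k = submat_rng (Ak k) b m 0 b"
      unfolding blk_def s_def e_def b_def m_def using If by simp
    have blkA22: "blk I (I!(k-1)) (Ak k) (k+1) ?nt (k+1) ?nt = submat_rng (Ak k) b m b m"
      unfolding blk_def s_def e_def b_def m_def using If by simp
    have blkLkk: "blk I 0 L k k k k = submat_rng L s e s e" unfolding blk_def s_def e_def by simp
    have blkRkk: "blk I 0 R k k k k = submat_rng R s e s e" unfolding blk_def s_def e_def by simp
    have blkLTk: "blk I 0 L (k+1) ?nt k k = submat_rng L e n s e" unfolding blk_def s_def e_def using If by simp
    have blkRkT: "blk I 0 R k k (k+1) ?nt = submat_rng R s e e n" unfolding blk_def s_def e_def using If by simp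
    have ck: "0 \<le> c12 k" "0 \<le> c21 k" "0 \<le> c22A k" "0 \<le> c22LU k" "0 \<le> c11 k" using c_nn c11_nn k k1 by auto
    have nn: "0 \<le> N X" for X using norm_nonneg[OF norm] .
    have pLR1: "N (submat_rng L s e s e) * N (submat_rng R s e e n) \<le> N L * N R"
      using sLkk sRkT nn by (intro mult_mono) auto
    have pLR2: "N (submat_rng L e n s e) * N (submat_rng R s e s e) \<le> N L * N R"
      using sLTk sRkk nn by (intro mult_mono) auto
    have pLR3: "N (submat_rng L e n s e) * N (submat_rng R s e e n) \<le> N L * N R"
      using sLTk sRkT nn by (intro mult_mono) auto
    have cu: "0 \<le> c * u" if "0 \<le> c" for c using that u by simp
    have b11: "N X11 \<le> c11 k * u * (\<rho> * N A)"
    proof -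
      have "N X11 \<le> c11 k * u * N (submat_rng (Ak k) 0 b 0 b)"
        using E11[rule_format, OF k1] unfolding X11_def blkA11 blkLkk blkRkk .
      also have "\<dots> \<le> c11 k * u * (\<rho> * N A)" using sA11 cu[OF ck(5)] by (rule mult_left_mono)
      finally show ?thesis .
    qed
    have b12: "N X12 \<le> c12 k * u * (N L * N R)"
    proof -
      have "N X12 \<le> c12 k * u * N (submat_rng L s e s e) * N (submat_rng R s e e n)"
        using E12[rule_format, OF k] unfolding X12_def blkA12 blkLkk blkRkT .
      also have "\<dots> = c12 k * u * (N (submat_rng L s e s e) * N (submat_rng R s e e n))" by (simp add: mult.assoc)
      also have "\<dots> \<le> c12 k * u * (N L * N R)" using pLR1 cu[OF ck(1)] by (rule mult_left_mono)
      finally show ?thesis .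
    qed
    have b21: "N X21 \<le> c21 k * u * (N L * N R)"
    proof -
      have "N X21 \<le> c21 k * u * N (submat_rng L e n s e) * N (submat_rng R s e s e)"
        using E21[rule_format, OF k] unfolding X21_def blkA21 blkLTk blkRkk .
      also have "\<dots> = c21 k * u * (N (submat_rng L e n s e) * N (submat_rng R s e s e))" by (simp add: mult.assoc)
      also have "\<dots> \<le> c21 k * u * (N L * N R)" using pLR2 cu[OF ck(2)] by (rule mult_left_mono)
      finally show ?thesis .
    qed
    have bG: "N G \<le> c22A k * u * (\<rho> * N A) + c22LU k * u * (N L * N R)"
    proof -
      have "N G \<le> c22A k * u * N (submat_rng (Ak k) b m b m) + c22LU k * u * N (submat_rng L e n s e) * N (submat_rng R s e e n)"
        using E22[rule_format, OF k] unfolding G_def blkA22 blkLTk blkRkT .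
      also have "\<dots> = c22A k * u * N (submat_rng (Ak k) b m b m) + c22LU k * u * (N (submat_rng L e n s e) * N (submat_rng R s e e n))" by (simp add: mult.assoc)
      also have "\<dots> \<le> c22A k * u * (\<rho> * N A) + c22LU k * u * (N L * N R)"
        using mult_left_mono[OF sA22 cu[OF ck(3)]] mult_left_mono[OF pLR3 cu[OF ck(4)]] by linarith
      finally show ?thesis .
    qed
    ultimately show ?thesis using b11 b12 b21 bG by linarith
  qed


  define Bd where "Bd k = ((\<Sum>j=k..?nt. c11 j) + (\<Sum>j=k..<?nt. c22A j)) * u * (\<rho> * N A)
      + (\<Sum>j=k..<?nt. c21 j + c12 j + c22LU j) * u * (N L * N R)" for k
  have ind: "d < ?nt \<Longrightarrow> N (D (?nt - d)) \<le> Bd (?nt - d)" for d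
  proof (induction d)
    case 0
    then show ?case using base unfolding Bd_def by simp
  next
    case (Suc d)
    define k where "k = ?nt - Suc d"
    have k: "k \<in> {1..<?nt}" and kk: "k + 1 = ?nt - d" using Suc.prems unfolding k_def by auto
    have IH: "N (D (k+1)) \<le> Bd (k+1)" using Suc kk by simp
    have "Bd k = Bd (k+1) + c11 k * u * (\<rho> * N A) + c22A k * u * (\<rho> * N A)
      + c21 k * u * (N L * N R) + c12 k * u * (N L * N R) + c22LU k * u * (N L * N R)"
      using k unfolding Bd_def by (simp add: sum.atLeast_Suc_atMost sum.atLeast_Suc_lessThan algebra_simps)
    then have "N (D k) \<le> Bd k" using step[OF k] IH by linarith
    then show ?case unfolding k_def .
  qed
  have "N (D 1) \<le> Bd 1" using ind[of "?nt - 1"] If by simp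
  moreover have "D 1 = A - L * R" unfolding D_def using If A1 sub_full[OF L] sub_full[OF R] by simp
  ultimately show ?thesis unfolding Bd_def \<rho>_def by (simp add: mult.assoc)
qed


end
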